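(* If $n$ is odd, then $\xi=H_1+H_2+\dots+H_{n-1}$ is the unique $\{1,\dots,n-1\}$-canonical element of $\mathrm{SU}(n)$.
   Context: For $\mathrm{SU}(n)$: $E_i$ is the $n\times n$ diagonal matrix with $(i,i)$ entry $\sqrt{-1}$, others $0$; $\mathfrak t=\{\sum a_iE_i:a_i\in\mathbb R,\sum a_i=0\}$; $H_i=\frac{n-i}{n}(E_1+\dots+E_i)-\frac{i}{n}(E_{i+1}+\dots+E_n)$, $i=1,\dots,n-1$. $\mathfrak I(\mathrm{SU}(n))=\{\sum a_iE_i\in\mathfrak t: a_i\in\mathbb Z\}$. $\mathfrak I'(\mathrm{SU}(n))$ is the set of elements of $\mathfrak I(\mathrm{SU}(n))$ of the form $\sum n_iH_i$ with all $n_i\ge0$. Partial order: $\sum n_iH_i\preceq\sum n_i'H_i$ iff $n_i'\le n_i$ for all $i$. For $I\subseteq\{1,\dots,n-1\}$, $\mathfrak C_I=\{\sum n_iH_i:n_i\ge0,\ n_j>0\iff j\in I\}$; an $I$-canonical element is a maximal element of $(\mathfrak I'(\mathrm{SU}(n))\cap\mathfrak C_I,\preceq)$. *)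

theory Defs
  imports Main "HOL.Real"
begin

text \<open>Elements of the Cartan subalgebra t of SU(n) are represented by their
coordinate vectors a = (a_1,...,a_n) w.r.t. E_1,...,E_n, as functions
nat => real, supported on {1..n} (value 0 outside).\<close>

definition Hvec :: "nat \<Rightarrow> nat \<Rightarrow> nat \<Rightarrow> real" where
  "Hvec n i k = (if k \<in> {1..n} then
                   (if k \<le> i then real (n - i) / real n else - real i / real n)
                 else 0)"

definition Hcomb :: "nat \<Rightarrow> (nat \<Rightarrow> real) \<Rightarrow> nat \<Rightarrow> real" where
  "Hcomb n c = (\<lambda>k. \<Sum>i\<in>{1..n-1}. c i * Hvec n i k)"

definition cartan_t :: "nat \<Rightarrow> (nat \<Rightarrow> real) set" where
  "cartan_t n = {x. (\<forall>k. k \<notin> {1..n} \<longrightarrow> x k = 0) \<and> (\<Sum>k\<in>{1..n}. x k) = 0}"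

definition lattice_I :: "nat \<Rightarrow> (nat \<Rightarrow> real) set" where
  "lattice_I n = {x \<in> cartan_t n. \<forall>k\<in>{1..n}. x k \<in> \<int>}"

definition lattice_I' :: "nat \<Rightarrow> (nat \<Rightarrow> real) set" where
  "lattice_I' n = {x \<in> lattice_I n. \<exists>c. (\<forall>i\<in>{1..n-1}. c i \<ge> 0) \<and> x = Hcomb n c}"

definition Hle :: "nat \<Rightarrow> (nat \<Rightarrow> real) \<Rightarrow> (nat \<Rightarrow> real) \<Rightarrow> bool" where
  "Hle n x y = (\<exists>c c'. x = Hcomb n c \<and> y = Hcomb n c' \<and> (\<forall>i\<in>{1..n-1}. c' i \<le> c i))"

definition cone_C :: "nat \<Rightarrow> nat set \<Rightarrow> (nat \<Rightarrow> real) set" where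
  "cone_C n I = {x. \<exists>c. x = Hcomb n c \<and> (\<forall>i\<in>{1..n-1}. c i \<ge> 0) \<and>
                          (\<forall>j\<in>{1..n-1}. c j > 0 \<longleftrightarrow> j \<in> I)}"

definition canonical :: "nat \<Rightarrow> nat set \<Rightarrow> (nat \<Rightarrow> real) \<Rightarrow> bool" where
  "canonical n I x = (x \<in> lattice_I' n \<inter> cone_C n I \<and>
     (\<forall>y \<in> lattice_I' n \<inter> cone_C n I. Hle n x y \<longrightarrow> y = x))"

end

theory Submission
  imports Defs
begin

lemma Hvec_diff:
  assumes "1 \<le> k" "k < n"
  shows "Hvec n i k - Hvec n i (Suc k) = (if i = k then 1 else 0)"
proof -
  have n0: "real n > 0" using assms by simp
  show ?thesis
  proof (cases "i = k")
    case True
    then show ?thesis using assms n0 by (simp add: Hvec_def of_nat_diff field_simps)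
  next
    case False
    then show ?thesis using assms by (auto simp: Hvec_def)
  qed
qed

lemma Hcomb_diff:
  assumes "1 \<le> k" "k < n"
  shows "Hcomb n c k - Hcomb n c (Suc k) = c k"
proof -
  have "Hcomb n c k - Hcomb n c (Suc k) = (\<Sum>i\<in>{1..n-1}. c i * (Hvec n i k - Hvec n i (Suc k)))"
    by (simp add: Hcomb_def sum_subtractf right_diff_distrib)
  also have "\<dots> = (\<Sum>i\<in>{1..n-1}. if i = k then c i else 0)"
    using assms by (intro sum.cong) (auto simp: Hvec_diff)
  also have "\<dots> = c k" using assms by (simp add: sum.delta, linarith)
  finally show ?thesis .
qed

lemma Hcomb_eq_coef:
  assumes "Hcomb n c = Hcomb n c'" "i \<in> {1..n-1}"
  shows "c i = c' i"
proof -
  have "1 \<le> i" "i < n" using assms(2) by auto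
  then show ?thesis using Hcomb_diff[of i n c] Hcomb_diff[of i n c'] assms(1) by simp
qed

lemma Hvec_sum:
  assumes "i \<in> {1..n-1}"
  shows "(\<Sum>k\<in>{1..n}. Hvec n i k) = 0"
proof -
  have i: "1 \<le> i" "i < n" using assms by auto
  have U: "{1..n} = {1..i} \<union> {Suc i..n}" using i by auto
  have "(\<Sum>k\<in>{1..n}. Hvec n i k) = (\<Sum>k\<in>{1..i}. Hvec n i k) + (\<Sum>k\<in>{Suc i..n}. Hvec n i k)"
    unfolding U by (rule sum.union_disjoint) auto
  also have "(\<Sum>k\<in>{1..i}. Hvec n i k) = (\<Sum>k\<in>{1..i}. real (n - i) / real n)"
    using i by (intro sum.cong) (auto simp: Hvec_def)
  also have "(\<Sum>k\<in>{Suc i..n}. Hvec n i k) = (\<Sum>k\<in>{Suc i..n}. - real i / real n)"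
    using i by (intro sum.cong) (auto simp: Hvec_def)
  finally show ?thesis using i by (simp add: of_nat_diff field_simps)
qed

lemma Hcomb_cartan: "Hcomb n c \<in> cartan_t n"
proof -
  have "(\<Sum>k\<in>{1..n}. Hcomb n c k) = (\<Sum>i\<in>{1..n-1}. c i * (\<Sum>k\<in>{1..n}. Hvec n i k))"
    unfolding Hcomb_def sum_distrib_left by (rule sum.swap)
  also have "\<dots> = 0"
  proof (rule sum.neutral, rule ballI)
    fix i assume "i \<in> {1..n-1}"
    then show "c i * (\<Sum>k\<in>{1..n}. Hvec n i k) = 0" using Hvec_sum[of i n] by simp
  qed
  moreover have "\<forall>k. k \<notin> {1..n} \<longrightarrow> Hcomb n c k = 0"
    unfolding Hcomb_def Hvec_def by (intro allI impI sum.neutral) auto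
  ultimately show ?thesis unfolding cartan_t_def by simp
qed

lemma xi_last:
  assumes "n = 2 * m + 1"
  shows "Hcomb n (\<lambda>i. 1) n = - real m"
proof -
  have "Hcomb n (\<lambda>i. 1) n = (\<Sum>i\<in>{1..n-1}. - real i / real n)"
    unfolding Hcomb_def using assms by (intro sum.cong) (auto simp: Hvec_def)
  also have "\<dots> = - (\<Sum>i\<in>{1..n-1}. real i) / real n"
    by (simp add: sum_negf sum_divide_distrib)
  also have "2 * (\<Sum>i\<in>{1..n-1}. real i) = real (n-1) * (real (n-1) + 1)"
    using double_gauss_sum_from_Suc_0[of "n-1", where ?'a = real] by simp
  hence "(\<Sum>i\<in>{1..n-1}. real i) = real m * real n" using assms by (simp add: field_simps)
  finally show ?thesis using assms by simp
qed

lemma xi_int: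
  assumes "odd n" "k \<in> {1..n}"
  shows "Hcomb n (\<lambda>i. 1) k \<in> \<int>"
proof -
  obtain m where m: "n = 2 * m + 1" using assms(1) oddE by blast
  have "\<forall>k. n - k = d \<and> 1 \<le> k \<and> k \<le> n \<longrightarrow> Hcomb n (\<lambda>i. 1) k = - real m + real d" for d
  proof (induction d)
    case 0
    then show ?case using xi_last[OF m] by auto
  next
    case (Suc d)
    show ?case
    proof (intro allI impI)
      fix k assume k: "n - k = Suc d \<and> 1 \<le> k \<and> k \<le> n"
      hence "n - Suc k = d \<and> 1 \<le> Suc k \<and> Suc k \<le> n" by auto
      hence "Hcomb n (\<lambda>i. 1) (Suc k) = - real m + real d" using Suc.IH by blast
      moreover have "Hcomb n (\<lambda>i. 1) k - Hcomb n (\<lambda>i. 1) (Suc k) = 1"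
      proof -
        have "1 \<le> k" "k < n" using k by auto
        thus ?thesis using Hcomb_diff[of k n "\<lambda>i. 1"] by simp
      qed
      ultimately show "Hcomb n (\<lambda>i. 1) k = - real m + real (Suc d)" by simp
    qed
  qed
  hence "Hcomb n (\<lambda>i. 1) k = - real m + real (n - k)" using assms(2) by auto
  thus ?thesis by simp
qed

lemma coef_int:
  assumes "Hcomb n c \<in> lattice_I n" "i \<in> {1..n-1}"
  shows "c i \<in> \<int>"
proof -
  have i: "1 \<le> i" "i < n" using assms(2) by auto
  have "Hcomb n c i \<in> \<int>" "Hcomb n c (Suc i) \<in> \<int>"
    using assms(1) i unfolding lattice_I_def by auto
  hence "Hcomb n c i - Hcomb n c (Suc i) \<in> \<int>" by simp
  thus ?thesis using Hcomb_diff[OF i] by simp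
qed

lemma int_pos_ge1: "(r::real) \<in> \<int> \<Longrightarrow> r > 0 \<Longrightarrow> r \<ge> 1"
proof -
  assume "r \<in> \<int>" "r > 0"
  then obtain z where z: "r = of_int z" by (auto elim: Ints_cases)
  with \<open>r > 0\<close> have "z > 0" by simp
  hence "z \<ge> 1" by simp
  thus "r \<ge> 1" using z by simp
qed

theorem mainTheorem11:
  fixes n :: nat and x :: "nat \<Rightarrow> real"
  assumes "odd n"
  shows "canonical n {1..n-1} x \<longleftrightarrow> x = Hcomb n (\<lambda>i. 1)"
proof -
  let ?xi = "Hcomb n (\<lambda>i. 1)"
  have xiI': "?xi \<in> lattice_I' n \<inter> cone_C n {1..n-1}"
    using xi_int[OF assms] Hcomb_cartan[of n "\<lambda>i. 1"]
    unfolding lattice_I'_def lattice_I_def cone_C_def by (auto intro!: exI[of _ "\<lambda>i. 1"])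
  show ?thesis
  proof
    assume can: "canonical n {1..n-1} x"
    hence xin: "x \<in> lattice_I' n \<inter> cone_C n {1..n-1}"
      and max: "\<forall>y \<in> lattice_I' n \<inter> cone_C n {1..n-1}. Hle n x y \<longrightarrow> y = x"
      unfolding canonical_def by auto
    obtain c where c: "x = Hcomb n c" "\<forall>j\<in>{1..n-1}. c j > 0"
      using xin unfolding cone_C_def by auto
    have "x \<in> lattice_I n" using xin unfolding lattice_I'_def by auto
    hence "\<forall>j\<in>{1..n-1}. c j \<ge> 1" using c coef_int int_pos_ge1 by metis
    hence "Hle n x ?xi" unfolding Hle_def using c by auto
    thus "x = ?xi" using max xiI' by auto
  next
    assume xe: "x = ?xi"
    have "\<forall>y \<in> lattice_I' n \<inter> cone_C n {1..n-1}. Hle n ?xi y \<longrightarrow> y = ?xi"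
    proof (intro ballI impI)
      fix y assume y: "y \<in> lattice_I' n \<inter> cone_C n {1..n-1}" and h: "Hle n ?xi y"
      obtain d d' where dd: "?xi = Hcomb n d" "y = Hcomb n d'" "\<forall>i\<in>{1..n-1}. d' i \<le> d i"
        using h unfolding Hle_def by auto
      obtain e where e: "y = Hcomb n e" "\<forall>j\<in>{1..n-1}. e j > 0"
        using y unfolding cone_C_def by auto
      have yI: "y \<in> lattice_I n" using y unfolding lattice_I'_def by auto
      have "\<forall>i\<in>{1..n-1}. d' i = 1"
      proof
        fix i assume i: "i \<in> {1..n-1}"
        have "d i = 1" using Hcomb_eq_coef[OF dd(1) i] by simp
        moreover have "e i = d' i" using Hcomb_eq_coef[of n e d' i] e dd i by simp
        moreover have "e i \<ge> 1" using coef_int[of n e i] yI e i int_pos_ge1 by auto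
        ultimately show "d' i = 1" using dd(3) i by fastforce
      qed
      thus "y = ?xi" unfolding dd(2) Hcomb_def by (auto intro!: sum.cong)
    qed
    thus "canonical n {1..n-1} x" unfolding canonical_def xe using xiI' by blast
  qed
qed

end
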